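(* Let $\boldsymbol\beta=(\beta_1,\dots,\beta_N)\in(0,\infty)^N$ and $v\in\mathbb R$ with $\beta_i+v>0$ for all $i$. For any $u_0\in(-\min_i\beta_i,\infty)$ there exist an open disk $U\subset\mathbb C$ containing $u_0$ and constants $C,r>0$ such that for all $u\in U$ and all $\boldsymbol X=(\boldsymbol X_1,\boldsymbol X_2)\in\mathbb R^{2N}$, $$\big|H^{\boldsymbol\beta,u,v}(\boldsymbol X)\big|\le C\exp\Big(-r\Big(\sum_{j=1}^N|X_1(j)|+\sum_{j=1}^N|X_2(j)|\Big)\Big).$$
   Context: For $\theta\in\mathbb C$ let $f_\theta(x)=e^{-\theta x-e^{-x}}$. For $\boldsymbol X_i=(X_i(1),\dots,X_i(N))\in\mathbb R^N$, $i=1,2$, and $u\in\mathbb C$, $$H^{\boldsymbol\beta,u,v}(\boldsymbol X)=\Big(\sum_{j=1}^Ne^{-\sum_{i=j+1}^NX_2(i)-\sum_{i=1}^{j-1}X_1(i)}\Big)^{-(u+v)}\prod_{j=1}^Nf_{\beta_j+v}(X_1(j))f_{\beta_j+u}(X_2(j)),$$ where for $S>0$ and complex $w$, $S^{w}=e^{w\log S}$. *)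

theory Defs
  imports "HOL-Analysis.Analysis"
begin

definition gumbel_f :: "complex \<Rightarrow> real \<Rightarrow> complex" where
  "gumbel_f \<theta> x = exp (- \<theta> * complex_of_real x - complex_of_real (exp (- x)))"

definition pos_cpow :: "real \<Rightarrow> complex \<Rightarrow> complex" where
  "pos_cpow S w = exp (w * complex_of_real (ln S))"

text \<open>H^{beta,u,v}(X_1,X_2); vectors in R^N are functions on nat, indexed by 1..N.\<close>
definition H_fun :: "nat \<Rightarrow> (nat \<Rightarrow> real) \<Rightarrow> complex \<Rightarrow> real \<Rightarrow>
    (nat \<Rightarrow> real) \<Rightarrow> (nat \<Rightarrow> real) \<Rightarrow> complex" where
  "H_fun N \<beta> u v X1 X2 =
     pos_cpow (\<Sum>j=1..N. exp (- (\<Sum>i=j+1..N. X2 i) - (\<Sum>i=1..j-1. X1 i)))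
              (- (u + complex_of_real v))
     * (\<Prod>j=1..N. gumbel_f (complex_of_real (\<beta> j + v)) (X1 j)
                   * gumbel_f (complex_of_real (\<beta> j) + u) (X2 j))"

end

theory Submission
  imports Defs
begin

lemma exp_quad_bound:
  fixes K y :: real assumes "K \<ge> 0"
  shows "K * y - exp y \<le> K^2"
proof (cases "y \<le> 0")
  case True
  then have "K*y \<le> 0" using assms by (simp add: mult_nonneg_nonpos)
  moreover have "exp y > 0" by simp
  moreover have "K^2 \<ge> 0" by simp
  ultimately show ?thesis by linarith
next
  case False
  have "1 + y/2 \<le> exp (y/2)" by (rule exp_ge_add_one_self)
  then have "(1 + y/2)^2 \<le> (exp (y/2))^2" using False by (intro power_mono) auto
  also have "(exp (y/2))^2 = exp y" by (simp add: power2_eq_square flip: exp_add)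
  finally have e: "(1+y/2)^2 \<le> exp y" .
  have "0 \<le> (K - y/2)^2" by simp
  then show ?thesis using e False by (simp add: power2_eq_square algebra_simps)
qed

lemma phi_bound:
  fixes m c D x :: real
  assumes "0 < m" "m \<le> c" "c \<le> D"
  shows "- c * x - exp (- x) \<le> (D + m)^2 - m * \<bar>x\<bar>"
proof (cases "x \<ge> 0")
  case True
  have "c * x \<ge> m * x" using True assms by (intro mult_right_mono) auto
  moreover have "exp (-x) > 0" by simp
  moreover have "(D+m)^2 \<ge> 0" by simp
  moreover have "\<bar>x\<bar> = x" using True by simp
  ultimately show ?thesis by linarith
next
  case False
  have "(c+m) * (-x) - exp (-x) \<le> (c+m)^2" by (rule exp_quad_bound) (use assms in auto)
  moreover have "(c+m)^2 \<le> (D+m)^2" using assms by (intro power_mono) auto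
  ultimately show ?thesis using False by (simp add: algebra_simps)
qed

lemma norm_H:
  "norm (H_fun N \<beta> u v X1 X2) = exp (- (Re u + v) * ln (\<Sum>j=1..N. exp (- (\<Sum>i=j+1..N. X2 i) - (\<Sum>i=1..j-1. X1 i)))
     + (\<Sum>j=1..N. (- (\<beta> j + v) * X1 j - exp (- X1 j)) + (- (\<beta> j + Re u) * X2 j - exp (- X2 j))))"
proof -
  let ?S = "(\<Sum>j=1..N. exp (- (\<Sum>i=j+1..N. X2 i) - (\<Sum>i=1..j-1. X1 i)))"
  have "norm (H_fun N \<beta> u v X1 X2) = exp (- (Re u + v) * ln ?S) *
     (\<Prod>j=1..N. exp (- (\<beta> j + v) * X1 j - exp (- X1 j)) * exp (- (\<beta> j + Re u) * X2 j - exp (- X2 j)))"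
    unfolding H_fun_def pos_cpow_def gumbel_f_def
    by (simp add: norm_mult prod_norm[symmetric] norm_exp_eq_Re)
  also have "(\<Prod>j=1..N. exp (- (\<beta> j + v) * X1 j - exp (- X1 j)) * exp (- (\<beta> j + Re u) * X2 j - exp (- X2 j)))
     = exp (\<Sum>j=1..N. (- (\<beta> j + v) * X1 j - exp (- X1 j)) + (- (\<beta> j + Re u) * X2 j - exp (- X2 j)))"
    by (simp add: exp_sum exp_add)
  finally show ?thesis by (simp add: exp_add)
qed


theorem lemma3p22:
  fixes N :: nat and \<beta> :: "nat \<Rightarrow> real" and v u0 :: real
  assumes "N \<ge> 1"
    and "\<forall>i\<in>{1..N}. \<beta> i > 0"
    and "\<forall>i\<in>{1..N}. \<beta> i + v > 0"
    and "u0 > - Min (\<beta> ` {1..N})"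
  shows "\<exists>c \<rho> C r. \<rho> > 0 \<and> complex_of_real u0 \<in> ball c \<rho> \<and> C > 0 \<and> r > 0 \<and>
          (\<forall>u\<in>ball c \<rho>. \<forall>X1 X2 :: nat \<Rightarrow> real.
             norm (H_fun N \<beta> u v X1 X2)
               \<le> C * exp (- r * ((\<Sum>j=1..N. \<bar>X1 j\<bar>) + (\<Sum>j=1..N. \<bar>X2 j\<bar>))))"
proof -
  define b where "b = Min (\<beta> ` {1..N})"
  define bv where "bv = Min ((\<lambda>j. \<beta> j + v) ` {1..N})"
  define B where "B = Max (\<beta> ` {1..N})"
  define \<delta> where "\<delta> = u0 + b"
  define \<rho> where "\<rho> = \<delta>/2"
  define m where "m = min (min b bv) \<rho>"
  define W where "W = \<bar>u0\<bar> + \<rho>"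
  define D where "D = B + 2*\<bar>v\<bar> + 2*W"
  define K where "K = (W + \<bar>v\<bar>) * ln (real N)"
  define C where "C = exp (K + 2 * real N * (D+m)^2)"
  have fin: "finite {1..N}" by simp
  have ne: "{1..N} \<noteq> {}" using assms(1) by auto
  have bj: "\<And>j. j\<in>{1..N} \<Longrightarrow> b \<le> \<beta> j" unfolding b_def using fin by (intro Min_le) auto
  have bvj: "\<And>j. j\<in>{1..N} \<Longrightarrow> bv \<le> \<beta> j + v" unfolding bv_def using fin by (intro Min_le) auto
  have Bj: "\<And>j. j\<in>{1..N} \<Longrightarrow> \<beta> j \<le> B" unfolding B_def using fin by (intro Max_ge) auto
  have "b \<in> \<beta> ` {1..N}" unfolding b_def using fin ne by (intro Min_in) auto
  then have bpos: "b > 0" using assms(2) by auto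
  have "bv \<in> (\<lambda>j. \<beta> j + v) ` {1..N}" unfolding bv_def using fin ne by (intro Min_in) auto
  then have bvpos: "bv > 0" using assms(3) by auto
  have \<delta>pos: "\<delta> > 0" using assms(4) unfolding \<delta>_def b_def by simp
  have \<rho>pos: "\<rho> > 0" using \<delta>pos \<rho>_def by simp
  have mpos: "m > 0" using bpos bvpos \<rho>pos m_def by simp
  have m_le: "m \<le> b" "m \<le> bv" "m \<le> \<rho>" unfolding m_def by auto
  have lnN: "ln (real N) \<ge> 0" using assms(1) by simp
  have Kpos: "K \<ge> 0" unfolding K_def W_def using lnN \<rho>pos by simp
  show ?thesis
  proof (intro exI conjI ballI allI)
    show "\<rho> > 0" by (rule \<rho>pos)
    show "complex_of_real u0 \<in> ball (complex_of_real u0) \<rho>" using \<rho>pos by simp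
    show "C > 0" unfolding C_def by simp
    show "m > 0" by (rule mpos)
    fix u and X1 X2 :: "nat \<Rightarrow> real" assume u: "u \<in> ball (complex_of_real u0) \<rho>"
    define w where "w = Re u"
    have "\<bar>Re (u - complex_of_real u0)\<bar> \<le> norm (u - complex_of_real u0)" by (rule abs_Re_le_cmod)
    moreover have "norm (u - complex_of_real u0) < \<rho>" using u by (simp add: dist_norm norm_minus_commute)
    ultimately have wb: "\<bar>w - u0\<bar> < \<rho>" unfolding w_def by simp
    define s where "s = w + v"
    define A where "A = (\<lambda>j. (\<Sum>i=j+1..N. X2 i) + (\<Sum>i=1..j-1. X1 i))"
    define S where "S = (\<Sum>j=1..N. exp (- (\<Sum>i=j+1..N. X2 i) - (\<Sum>i=1..j-1. X1 i)))"
    have SA: "S = (\<Sum>j=1..N. exp (- A j))" unfolding S_def A_def by (simp add: algebra_simps)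
    have Spos: "S > 0" unfolding SA using fin ne by (intro sum_pos) auto
    have Ak: "A k = (\<Sum>i=1..N. (if i<k then X1 i else 0) + (if k<i then X2 i else 0))"
      if k: "k \<in> {1..N}" for k
    proof -
      have e1: "{i\<in>{1..N}. i<k} = {1..k-1}" using k by auto
      have e2: "{i\<in>{1..N}. k<i} = {k+1..N}" using k by auto
      have "(\<Sum>i=1..N. (if i<k then X1 i else 0) + (if k<i then X2 i else 0))
          = (\<Sum>i\<in>{i\<in>{1..N}. i<k}. X1 i) + (\<Sum>i\<in>{i\<in>{1..N}. k<i}. X2 i)"
        by (simp only: sum.distrib sum.inter_filter[OF fin])
      then show ?thesis unfolding A_def e1 e2 by simp
    qed
    have lnS_ge: "- A k \<le> ln S" if k: "k \<in> {1..N}" for k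
    proof -
      have "exp (- A k) \<le> S" unfolding SA using k fin by (intro member_le_sum) auto
      then have "ln (exp (- A k)) \<le> ln S" using Spos by (subst ln_le_cancel_iff) auto
      then show ?thesis by simp
    qed
    have wW: "\<bar>w\<bar> \<le> W" using wb unfolding W_def by linarith
    have key: "\<exists>K0 d1 d2. K0 \<le> K \<and> - s * ln S \<le> K0 + (\<Sum>j=1..N. d1 j * X1 j + d2 j * X2 j) \<and>
       (\<forall>j\<in>{1..N}. m \<le> \<beta> j + v - d1 j \<and> \<beta> j + v - d1 j \<le> D \<and> m \<le> \<beta> j + w - d2 j \<and> \<beta> j + w - d2 j \<le> D)"
    proof (cases "s \<ge> 0")
      case True
      define \<alpha> where "\<alpha> = max 0 (min w s)"
      define \<gamma> where "\<gamma> = s - \<alpha>"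
      have a0: "\<alpha> \<ge> 0" and g0: "\<gamma> \<ge> 0" unfolding \<gamma>_def \<alpha>_def using True by auto
      have N1: "1 \<in> {1..N}" and NN: "N \<in> {1..N}" using assms(1) by auto
      have "- s * ln S = - \<alpha> * ln S - \<gamma> * ln S" unfolding \<gamma>_def by (simp add: algebra_simps)
      also have "\<dots> \<le> \<alpha> * A 1 + \<gamma> * A N"
      proof -
        have "- \<alpha> * ln S \<le> \<alpha> * A 1" using mult_left_mono[OF lnS_ge[OF N1] a0] by simp
        moreover have "- \<gamma> * ln S \<le> \<gamma> * A N" using mult_left_mono[OF lnS_ge[OF NN] g0] by simp
        ultimately show ?thesis by linarith
      qed
      also have "\<alpha> * A 1 + \<gamma> * A N = (\<Sum>j=1..N. (if j<N then \<gamma> else 0) * X1 j + (if 1<j then \<alpha> else 0) * X2 j)"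
        unfolding Ak[OF N1] Ak[OF NN] sum_distrib_left sum.distrib[symmetric]
        by (intro sum.cong) auto
      finally have "- s * ln S \<le> 0 + (\<Sum>j=1..N. (if j<N then \<gamma> else 0) * X1 j + (if 1<j then \<alpha> else 0) * X2 j)" by simp
      moreover have "\<forall>j\<in>{1..N}. m \<le> \<beta> j + v - (if j<N then \<gamma> else 0) \<and> \<beta> j + v - (if j<N then \<gamma> else 0) \<le> D
          \<and> m \<le> \<beta> j + w - (if 1<j then \<alpha> else 0) \<and> \<beta> j + w - (if 1<j then \<alpha> else 0) \<le> D"
      proof
        fix j assume j: "j \<in> {1..N}"
        note h = bj[OF j] bvj[OF j] Bj[OF j] m_le wb wW \<rho>_def \<delta>_def D_def a0 g0 True s_def
        show "m \<le> \<beta> j + v - (if j<N then \<gamma> else 0) \<and> \<beta> j + v - (if j<N then \<gamma> else 0) \<le> D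
          \<and> m \<le> \<beta> j + w - (if 1<j then \<alpha> else 0) \<and> \<beta> j + w - (if 1<j then \<alpha> else 0) \<le> D"
          using h unfolding \<gamma>_def \<alpha>_def by (auto simp: max_def min_def abs_if split: if_splits)
      qed
      ultimately show ?thesis using Kpos
        by (intro exI[of _ 0] exI[of _ "\<lambda>j. if j<N then \<gamma> else 0"] exI[of _ "\<lambda>j. if 1<j then \<alpha> else 0"]) simp
    next
      case False
      have "Min (A ` {1..N}) \<in> A ` {1..N}" using fin ne by (intro Min_in) auto
      then obtain k where k: "k \<in> {1..N}" "A k = Min (A ` {1..N})" by (metis imageE)
      have Akj: "A k \<le> A j" if "j \<in> {1..N}" for j using k that fin by simp
      have "S \<le> (\<Sum>j=1..N. exp (- A k))" unfolding SA by (intro sum_mono) (simp add: Akj)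
      also have "\<dots> = real N * exp (- A k)" by simp
      finally have "ln S \<le> ln (real N * exp (- A k))" using Spos by (subst ln_le_cancel_iff) auto
      also have "\<dots> = ln (real N) - A k" using assms(1) by (simp add: ln_mult)
      finally have lnS: "ln S \<le> ln (real N) - A k" .
      have "- s * ln S \<le> - s * (ln (real N) - A k)" using False lnS by (intro mult_left_mono) auto
      also have "\<dots> = - s * ln (real N) + s * A k" by (simp add: algebra_simps)
      also have "s * A k = (\<Sum>j=1..N. (if j<k then s else 0) * X1 j + (if k<j then s else 0) * X2 j)"
        unfolding Ak[OF k(1)] sum_distrib_left by (intro sum.cong) auto
      finally have i1: "- s * ln S \<le> - s * ln (real N) + (\<Sum>j=1..N. (if j<k then s else 0) * X1 j + (if k<j then s else 0) * X2 j)" .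
      have "- s \<le> W + \<bar>v\<bar>" using wW s_def by linarith
      then have i2: "- s * ln (real N) \<le> K" unfolding K_def using lnN by (intro mult_right_mono) auto
      have "\<forall>j\<in>{1..N}. m \<le> \<beta> j + v - (if j<k then s else 0) \<and> \<beta> j + v - (if j<k then s else 0) \<le> D
          \<and> m \<le> \<beta> j + w - (if k<j then s else 0) \<and> \<beta> j + w - (if k<j then s else 0) \<le> D"
      proof
        fix j assume j: "j \<in> {1..N}"
        note h = bj[OF j] bvj[OF j] Bj[OF j] m_le wb wW \<rho>_def \<delta>_def D_def False s_def
        show "m \<le> \<beta> j + v - (if j<k then s else 0) \<and> \<beta> j + v - (if j<k then s else 0) \<le> D
          \<and> m \<le> \<beta> j + w - (if k<j then s else 0) \<and> \<beta> j + w - (if k<j then s else 0) \<le> D"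
          using h by (auto simp: abs_if split: if_splits)
      qed
      then show ?thesis using i1 i2
        by (intro exI[of _ "- s * ln (real N)"] exI[of _ "\<lambda>j. if j<k then s else 0"] exI[of _ "\<lambda>j. if k<j then s else 0"]) simp
    qed
    then obtain K0 d1 d2 where K0: "K0 \<le> K" and ineq: "- s * ln S \<le> K0 + (\<Sum>j=1..N. d1 j * X1 j + d2 j * X2 j)"
      and cb: "\<forall>j\<in>{1..N}. m \<le> \<beta> j + v - d1 j \<and> \<beta> j + v - d1 j \<le> D \<and> m \<le> \<beta> j + w - d2 j \<and> \<beta> j + w - d2 j \<le> D"
      by blast
    define F where "F = (\<lambda>j. (- (\<beta> j + v) * X1 j - exp (- X1 j)) + (- (\<beta> j + Re u) * X2 j - exp (- X2 j)))"
    have nH: "norm (H_fun N \<beta> u v X1 X2) = exp (- s * ln S + (\<Sum>j=1..N. F j))"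
      unfolding norm_H s_def w_def S_def F_def ..
    have pj: "d1 j * X1 j + d2 j * X2 j + F j \<le> 2 * (D+m)^2 - m * \<bar>X1 j\<bar> - m * \<bar>X2 j\<bar>"
      if j: "j \<in> {1..N}" for j
    proof -
      have c: "m \<le> \<beta> j + v - d1 j" "\<beta> j + v - d1 j \<le> D" "m \<le> \<beta> j + w - d2 j" "\<beta> j + w - d2 j \<le> D"
        using cb j by auto
      have 1: "- (\<beta> j + v - d1 j) * X1 j - exp (- X1 j) \<le> (D+m)^2 - m * \<bar>X1 j\<bar>"
        by (rule phi_bound) (use c mpos in auto)
      have 2: "- (\<beta> j + w - d2 j) * X2 j - exp (- X2 j) \<le> (D+m)^2 - m * \<bar>X2 j\<bar>"
        by (rule phi_bound) (use c mpos in auto)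
      show ?thesis using 1 2 unfolding F_def w_def by (simp add: algebra_simps)
    qed
    have "- s * ln S + (\<Sum>j=1..N. F j) \<le> K0 + (\<Sum>j=1..N. d1 j * X1 j + d2 j * X2 j + F j)"
      using ineq by (simp add: sum.distrib)
    also have "\<dots> \<le> K0 + (\<Sum>j=1..N. 2 * (D+m)^2 - m * \<bar>X1 j\<bar> - m * \<bar>X2 j\<bar>)"
      using pj by (intro add_left_mono sum_mono) auto
    also have "\<dots> = K0 + 2 * real N * (D+m)^2 - m * ((\<Sum>j=1..N. \<bar>X1 j\<bar>) + (\<Sum>j=1..N. \<bar>X2 j\<bar>))"
      by (simp add: sum_subtractf sum_distrib_left sum.distrib algebra_simps)
    also have "\<dots> \<le> K + 2 * real N * (D+m)^2 - m * ((\<Sum>j=1..N. \<bar>X1 j\<bar>) + (\<Sum>j=1..N. \<bar>X2 j\<bar>))"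
      using K0 by simp
    finally have "norm (H_fun N \<beta> u v X1 X2) \<le> exp (K + 2 * real N * (D+m)^2 - m * ((\<Sum>j=1..N. \<bar>X1 j\<bar>) + (\<Sum>j=1..N. \<bar>X2 j\<bar>)))"
      unfolding nH by simp
    also have "\<dots> = C * exp (- m * ((\<Sum>j=1..N. \<bar>X1 j\<bar>) + (\<Sum>j=1..N. \<bar>X2 j\<bar>)))"
      unfolding C_def by (simp add: exp_add[symmetric])
    finally show "norm (H_fun N \<beta> u v X1 X2) \<le> C * exp (- m * ((\<Sum>j=1..N. \<bar>X1 j\<bar>) + (\<Sum>j=1..N. \<bar>X2 j\<bar>)))" .
  qed
qed

end
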